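(* For all $j\ge0$ and all $x,u\in O$: (1) $D_j(\alpha x)=\alpha^jD_j(x)$ for $\alpha\in\mathbf{F}_q^*$; (2) $D_j(x+u)=\sum_{e+f=j}\binom{j}{e}D_e(x)D_f(u)$; (3) $D'_j(\alpha x)=\alpha^jD'_j(x)$ for $\alpha\in\mathbf{F}_q^*$; (4) $D'_j(x+u)=\sum_{e+f=j}\binom{j}{e}D_e(x)D'_f(u)$. Here the sums run over pairs of nonnegative integers $(e,f)$ and binomial coefficients are read in $\mathbf{F}_q$.
   Context: Let $q$ be a prime power, $O=\mathbf{F}_q[[T]]$. Hasse derivatives: $\mathcal{D}_n(\sum_ia_iT^i)=\sum_i\binom{i}{n}a_iT^{i-n}$ (binomials in $\mathbf{F}_q$). For $j\ge0$ with base-$q$ expansion $j=\alpha_0+\alpha_1q+\cdots+\alpha_sq^s$ ($0\le\alpha_i<q$): $D_j(x)=\prod_{n=0}^s\mathcal{D}_n(x)^{\alpha_n}$ ($D_0=1$), and $D'_j(x)=\prod_{n=0}^sD'_{\alpha_nq^n}(x)$ where $D'_{\alpha q^n}(x)=\mathcal{D}_n(x)^\alpha$ if $0\le\alpha<q-1$ and $D'_{(q-1)q^n}(x)=\mathcal{D}_n(x)^{q-1}-1$. *)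

theory Defs
  imports "HOL-Computational_Algebra.Formal_Power_Series" "HOL-Library.Cardinality"
begin

text \<open>O = F_q[[T]] is modelled as 'a fps for a finite field type 'a with q = CARD('a).\<close>

definition hasse :: "nat \<Rightarrow> 'a::field fps \<Rightarrow> 'a fps" where
  "hasse n x = Abs_fps (\<lambda>k. of_nat ((k + n) choose n) * fps_nth x (k + n))"

definition qdigit :: "'a::{field,finite} itself \<Rightarrow> nat \<Rightarrow> nat \<Rightarrow> nat" where
  "qdigit (t::'a itself) j n = (j div CARD('a) ^ n) mod CARD('a)"

text \<open>D_j(x) = prod_n (hasse n x)^(alpha_n). Digits with index n > j vanish (q >= 2),
  so taking the product over n <= j covers the whole base-q expansion.\<close>
definition Dj :: "nat \<Rightarrow> 'a::{field,finite} fps \<Rightarrow> 'a fps" where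
  "Dj j x = (\<Prod>n\<in>{..j}. hasse n x ^ qdigit TYPE('a) j n)"

text \<open>D'_(alpha q^n)(x).\<close>
definition Dprime_digit :: "nat \<Rightarrow> nat \<Rightarrow> 'a::{field,finite} fps \<Rightarrow> 'a fps" where
  "Dprime_digit a n x = (if a < CARD('a) - 1 then hasse n x ^ a
                         else hasse n x ^ (CARD('a) - 1) - 1)"

definition Dpj :: "nat \<Rightarrow> 'a::{field,finite} fps \<Rightarrow> 'a fps" where
  "Dpj j x = (\<Prod>n\<in>{..j}. Dprime_digit (qdigit TYPE('a) j n) n x)"

end

theory Submission imports Defs "HOL-Computational_Algebra.Polynomial" begin

lemma card_ge2: "CARD('a::{field,finite}) \<ge> 2"
proof -
  have "{0::'a, 1} \<subseteq> UNIV" by simp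
  hence "card {0::'a,1} \<le> CARD('a)" by (intro card_mono) auto
  thus ?thesis by simp
qed

lemma fermat_field:
  fixes y :: "'a::{field,finite}"
  assumes "y \<noteq> 0" shows "y ^ (CARD('a) - 1) = 1"
proof -
  let ?S = "UNIV - {0::'a}"
  have fin: "finite ?S" by simp
  have inj: "inj_on (\<lambda>z. y * z) ?S" using assms by (auto simp: inj_on_def)
  have img: "(\<lambda>z. y * z) ` ?S = ?S"
  proof
    show "(\<lambda>z. y * z) ` ?S \<subseteq> ?S" using assms by auto
    show "?S \<subseteq> (\<lambda>z. y * z) ` ?S"
    proof
      fix w assume "w \<in> ?S"
      hence "w = y * (w / y)" "w / y \<in> ?S" using assms by auto
      thus "w \<in> (\<lambda>z. y * z) ` ?S" by blast
    qed
  qed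
  have "prod (\<lambda>z. z) ?S = prod (\<lambda>z. z) ((\<lambda>z. y * z) ` ?S)" using img by simp
  also have "\<dots> = prod (\<lambda>z. y * z) ?S" using inj by (simp add: prod.reindex)
  also have "\<dots> = y ^ card ?S * prod (\<lambda>z. z) ?S" by (simp add: prod.distrib)
  finally have "y ^ card ?S * prod (\<lambda>z. z) ?S = 1 * prod (\<lambda>z. z) ?S" by simp
  moreover have "prod (\<lambda>z. z) ?S \<noteq> 0" by (simp add: prod_zero_iff)
  ultimately have "y ^ card ?S = 1" by simp
  moreover have "card ?S = CARD('a) - 1" by (simp add: card_Diff_singleton)
  ultimately show ?thesis by simp
qed

lemma fermat_field2:
  fixes y :: "'a::{field,finite}"
  shows "y ^ CARD('a) = y"
proof (cases "y = 0")
  case True thus ?thesis using card_ge2[where 'a='a] by simp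
next
  case False
  have "y ^ CARD('a) = y * y ^ (CARD('a) - 1)" using card_ge2[where 'a='a]
    by (metis Suc_diff_le le_trans one_le_numeral power_Suc diff_Suc_1)
  thus ?thesis using fermat_field[OF False] by simp
qed


lemma binom_card_zero:
  assumes "0 < k" "k < CARD('a::{field,finite})"
  shows "(of_nat (CARD('a) choose k) :: 'a) = 0"
proof -
  define q where "q = CARD('a)"
  have q2: "q \<ge> 2" using card_ge2[where 'a='a] q_def by simp
  define p :: "'a poly" where "p = (\<Sum>i\<in>{1..q-1}. monom (of_nat (q choose i)) i)"
  have coeffp: "coeff p k = of_nat (q choose k)"
    using assms unfolding p_def q_def[symmetric] by (simp add: coeff_sum coeff_monom)
  have degp: "degree p \<le> q - 1" unfolding p_def
    by (intro degree_sum_le) (auto simp: degree_monom_le intro: order.trans[OF degree_monom_le])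
  have polyp: "poly p y = 0" for y :: 'a
  proof -
    have "(y + 1) ^ q = (\<Sum>i\<le>q. of_nat (q choose i) * y ^ i * 1 ^ (q - i))"
      by (rule binomial_ring)
    also have "\<dots> = (\<Sum>i\<in>insert 0 (insert q {1..q-1}). of_nat (q choose i) * y ^ i)"
      using q2 by (intro sum.cong) auto
    also have "\<dots> = 1 + (y ^ q + (\<Sum>i\<in>{1..q-1}. of_nat (q choose i) * y ^ i))"
      using q2 by (subst sum.insert; simp)+
    finally have "(y + 1) ^ q = 1 + (y ^ q + poly p y)"
      by (simp add: p_def poly_sum poly_monom)
    thus ?thesis using fermat_field2[of y] fermat_field2[of "y+1"] by (simp add: q_def)
  qed
  have "p = 0"
  proof (rule poly_eqI_degree[where A=UNIV])
    show "card (UNIV::'a set) > degree p" using degp q2 q_def by simp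
    show "card (UNIV::'a set) > degree (0::'a poly)" using q2 q_def by simp
  qed (simp add: polyp)
  thus ?thesis using coeffp q_def by simp
qed


lemma binom_sum_reduce:
  fixes n r :: nat
  shows "(of_nat ((CARD('a::{field,finite}) + n) choose r) :: 'a) =
     of_nat (n choose r) + (if CARD('a) \<le> r then of_nat (n choose (r - CARD('a))) else 0)"
proof -
  define q where "q = CARD('a)"
  have q2: "q \<ge> 2" using card_ge2[where 'a='a] q_def by simp
  have "(of_nat ((q + n) choose r) :: 'a) = of_nat (\<Sum>k\<le>r. (q choose k) * (n choose (r - k)))"
    by (simp add: vandermonde)
  also have "\<dots> = (\<Sum>k\<le>r. (of_nat (q choose k) :: 'a) * of_nat (n choose (r - k)))"
    by simp
  also have "\<dots> = (\<Sum>k\<in>{0} \<union> (if q \<le> r then {q} else {}). (of_nat (q choose k) :: 'a) * of_nat (n choose (r - k)))"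
  proof (rule sum.mono_neutral_right)
    show "\<forall>k\<in>{..r} - ({0} \<union> (if q \<le> r then {q} else {})). (of_nat (q choose k) :: 'a) * of_nat (n choose (r - k)) = 0"
    proof
      fix k assume k: "k \<in> {..r} - ({0} \<union> (if q \<le> r then {q} else {}))"
      show "(of_nat (q choose k) :: 'a) * of_nat (n choose (r - k)) = 0"
      proof (cases "k < q")
        case True
        thus ?thesis using k binom_card_zero[of k, where 'a='a] q_def by auto
      next
        case False
        hence "k > q" using k by (auto split: if_splits)
        thus ?thesis by (simp add: binomial_eq_0)
      qed
    qed
  qed (auto split: if_splits)
  also have "\<dots> = of_nat (n choose r) + (if q \<le> r then of_nat (n choose (r - q)) else 0)"
    using q2 by auto
  finally show ?thesis by (simp add: q_def)
qed

lemma lucas_step: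
  fixes a b m e :: nat
  assumes "a < CARD('a::{field,finite})" "b < CARD('a)"
  shows "(of_nat ((a + CARD('a) * m) choose (b + CARD('a) * e)) :: 'a) =
         of_nat (a choose b) * of_nat (m choose e)"
  using assms
proof (induction m arbitrary: e)
  case 0
  then show ?case
  proof (cases e)
    case (Suc e')
    hence "a < b + CARD('a) * e" using 0 by (simp add: add.commute trans_less_add1)
    then show ?thesis using Suc by (simp add: binomial_eq_0)
  qed simp
next
  case (Suc m)
  have eq: "a + CARD('a) * Suc m = CARD('a) + (a + CARD('a) * m)" by simp
  show ?case
  proof (cases e)
    case 0
    then show ?thesis using Suc.prems Suc.IH[of 0] by (simp only: eq binom_sum_reduce) simp
  next
    case (Suc e')
    have r: "b + CARD('a) * e - CARD('a) = b + CARD('a) * e'" using Suc by simp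
    have "(of_nat ((a + CARD('a) * Suc m) choose (b + CARD('a) * e)) :: 'a)
        = of_nat ((a + CARD('a) * m) choose (b + CARD('a) * e)) + of_nat ((a + CARD('a) * m) choose (b + CARD('a) * e'))"
      using Suc by (simp only: eq binom_sum_reduce r) simp
    also have "\<dots> = of_nat (a choose b) * (of_nat (m choose e) + of_nat (m choose e'))"
      using Suc.IH Suc.prems by (simp add: distrib_left)
    also have "\<dots> = of_nat (a choose b) * of_nat (Suc m choose e)"
      using Suc by simp
    finally show ?thesis .
  qed
qed


function GG :: "(nat \<Rightarrow> nat \<Rightarrow> 'a::{field,finite} fps) \<Rightarrow> nat \<Rightarrow> nat \<Rightarrow> 'a fps" where
  "GG K s j = (if j = 0 then 1 else K (j mod CARD('a)) s * GG K (Suc s) (j div CARD('a)))"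
  by auto
termination
proof (relation "measure (\<lambda>(K,s,j). j)")
  show "wf (measure (\<lambda>(K,s,j). j))" by simp
  fix K :: "nat \<Rightarrow> nat \<Rightarrow> 'a::{field,finite} fps" and s j :: nat
  assume "j \<noteq> 0"
  moreover have "CARD('a) \<ge> 2" by (rule card_ge2)
  ultimately show "((K, Suc s, j div CARD('a)), K, s, j) \<in> measure (\<lambda>(K, s, j). j)"
    by simp
qed

declare GG.simps [simp del]

lemma GG_0 [simp]: "GG K s 0 = 1"
  by (simp add: GG.simps)

lemma GG_unfold:
  fixes K :: "nat \<Rightarrow> nat \<Rightarrow> 'a::{field,finite} fps"
  assumes "K 0 s = 1"
  shows "GG K s j = K (j mod CARD('a)) s * GG K (Suc s) (j div CARD('a))"
  using assms by (cases "j = 0") (simp_all add: GG.simps[of K s j])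

lemma GG_scal:
  fixes K L :: "nat \<Rightarrow> nat \<Rightarrow> 'a::{field,finite} fps"
  assumes "\<And>a s. a < CARD('a) \<Longrightarrow> L a s = fps_const (\<alpha> ^ a) * K a s"
  shows "GG L s j = fps_const (\<alpha> ^ j) * GG K s j"
proof (induction j arbitrary: s rule: less_induct)
  case (less j)
  show ?case
  proof (cases "j = 0")
    case True thus ?thesis by simp
  next
    case False
    have q2: "CARD('a) \<ge> 2" by (rule card_ge2)
    define a where "a = j mod CARD('a)"
    define m where "m = j div CARD('a)"
    have m: "m < j" using False q2 unfolding m_def by simp
    have a: "a < CARD('a)" using q2 unfolding a_def by simp
    have j: "j = a + CARD('a) * m" unfolding a_def m_def by simp
    have pw: "\<alpha> ^ j = \<alpha> ^ a * \<alpha> ^ m"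
      by (simp add: j power_add power_mult fermat_field2)
    have "GG L s j = L a s * GG L (Suc s) m"
      using False by (simp add: GG.simps[of L s j] a_def m_def)
    also have "\<dots> = fps_const (\<alpha> ^ a) * K a s * (fps_const (\<alpha> ^ m) * GG K (Suc s) m)"
      using assms[OF a] less.IH[OF m] by simp
    also have "\<dots> = fps_const (\<alpha> ^ j) * (K a s * GG K (Suc s) m)"
      by (simp add: pw fps_const_mult[symmetric] ac_simps del: fps_const_mult)
    also have "K a s * GG K (Suc s) m = GG K s j"
      using False by (simp add: GG.simps[of K s j] a_def m_def)
    finally show ?thesis .
  qed
qed

lemma GG_prod:
  fixes K :: "nat \<Rightarrow> nat \<Rightarrow> 'a::{field,finite} fps"
  assumes K0: "\<And>s. K 0 s = 1"
  shows "j < CARD('a) ^ Suc N \<Longrightarrow> (\<Prod>n\<in>{..N}. K (qdigit TYPE('a) j n) (n + s)) = GG K s j"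
proof (induction N arbitrary: j s)
  case 0
  hence "j div CARD('a) = 0" by simp
  then show ?case using GG_unfold[of K s j, OF K0] by (simp add: qdigit_def)
next
  case (Suc N)
  have q2: "CARD('a) \<ge> 2" by (rule card_ge2)
  have dig: "qdigit TYPE('a) j (Suc n) = qdigit TYPE('a) (j div CARD('a)) n" for n
    by (simp add: qdigit_def div_mult2_eq)
  have lt: "j div CARD('a) < CARD('a) ^ Suc N"
    using Suc.prems q2 by (simp add: div_less_iff_less_mult mult.commute)
  have "(\<Prod>n\<in>{..Suc N}. K (qdigit TYPE('a) j n) (n + s))
      = K (qdigit TYPE('a) j 0) s * (\<Prod>n\<in>{..N}. K (qdigit TYPE('a) (j div CARD('a)) n) (n + Suc s))"
    unfolding prod.atMost_Suc_shift by (simp add: dig)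
  also have "\<dots> = K (j mod CARD('a)) s * GG K (Suc s) (j div CARD('a))"
    using Suc.IH[OF lt, of "Suc s"] by (simp add: qdigit_def)
  also have "\<dots> = GG K s j" using GG_unfold[of K s j, OF K0] by simp
  finally show ?case .
qed

lemma j_lt_pow: "j < CARD('a::{field,finite}) ^ Suc j"
proof -
  have "j < 2 ^ j" by (rule less_exp)
  hence "j < 2 ^ Suc j" by (simp only: power_Suc)
  also have "(2::nat) ^ Suc j \<le> CARD('a) ^ Suc j" by (rule power_mono) (use card_ge2[where 'a='a] in auto)
  finally show ?thesis .
qed

lemma Dj_GG: "Dj j (x :: 'a::{field,finite} fps) = GG (\<lambda>a n. hasse n x ^ a) 0 j"
  unfolding Dj_def using GG_prod[of "\<lambda>a n. hasse n x ^ a" j j 0] j_lt_pow[where 'a='a, of j] by simp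

lemma Dprime_digit_0 [simp]: "Dprime_digit 0 n (x :: 'a::{field,finite} fps) = 1"
  using card_ge2[where 'a='a] by (simp add: Dprime_digit_def)

lemma Dpj_GG: "Dpj j (x :: 'a::{field,finite} fps) = GG (\<lambda>a n. Dprime_digit a n x) 0 j"
  unfolding Dpj_def using GG_prod[of "\<lambda>a n. Dprime_digit a n x" j j 0] j_lt_pow[where 'a='a, of j] by simp

lemma hasse_scal: "hasse n (fps_const \<alpha> * x) = fps_const \<alpha> * hasse n x"
  by (simp add: hasse_def fps_eq_iff)

lemma hasse_add: "hasse n (x + u) = hasse n x + hasse n u"
  by (simp add: hasse_def fps_eq_iff distrib_left)


lemma GG_add:
  fixes X Y Z :: "nat \<Rightarrow> nat \<Rightarrow> 'a::{field,finite} fps"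
  assumes X0: "\<And>s. X 0 s = 1" and Y0: "\<And>s. Y 0 s = 1" and Z0: "\<And>s. Z 0 s = 1"
    and Z: "\<And>a s. a < CARD('a) \<Longrightarrow>
       Z a s = (\<Sum>b\<le>a. fps_const (of_nat (a choose b)) * X b s * Y (a - b) s)"
  shows "GG Z s j = (\<Sum>e\<le>j. fps_const (of_nat (j choose e)) * GG X s e * GG Y s (j - e))"
proof (induction j arbitrary: s rule: less_induct)
  case (less j)
  show ?case
  proof (cases "j = 0")
    case True thus ?thesis by simp
  next
    case False
    define q where "q = CARD('a)"
    have q2: "q \<ge> 2" unfolding q_def by (rule card_ge2)
    define a where "a = j mod q"
    define m where "m = j div q"
    have m: "m < j" using False q2 unfolding m_def by simp
    have a: "a < q" using q2 unfolding a_def by simp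
    have j: "j = a + q * m" unfolding a_def m_def by simp
    define F where "F e = fps_const (of_nat (j choose e)) * GG X s e * GG Y s (j - e)" for e
    have "(\<Sum>e\<le>j. F e) = (\<Sum>e<Suc m * q. F e)"
    proof (rule sum.mono_neutral_left)
      show "{..j} \<subseteq> {..<Suc m * q}" using j a by (auto simp: mult.commute)
      show "\<forall>i\<in>{..<Suc m * q} - {..j}. F i = 0" by (auto simp: F_def binomial_eq_0)
    qed auto
    also have "\<dots> = (\<Sum>e'<Suc m. \<Sum>e\<in>{e' * q..<e' * q + q}. F e)"
      by (rule sum.nat_group[symmetric])
    also have "\<dots> = (\<Sum>e'\<le>m. \<Sum>b<q. F (b + q * e'))"
    proof (rule sum.cong)
      fix e' assume "e' \<in> {..m}"
      have "{e' * q..<e' * q + q} = (\<lambda>b. b + q * e') ` {..<q}"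
      proof
        show "{e' * q..<e' * q + q} \<subseteq> (\<lambda>b. b + q * e') ` {..<q}"
        proof
          fix x assume "x \<in> {e' * q..<e' * q + q}"
          hence "x = (x - q * e') + q * e'" "x - q * e' < q" by (auto simp: mult.commute)
          thus "x \<in> (\<lambda>b. b + q * e') ` {..<q}" by blast
        qed
      qed (auto simp: mult.commute)
      moreover have "inj_on (\<lambda>b. b + q * e') {..<q}" by (auto simp: inj_on_def)
      ultimately show "(\<Sum>e\<in>{e' * q..<e' * q + q}. F e) = (\<Sum>b<q. F (b + q * e'))"
        by (simp add: sum.reindex)
    qed (auto simp: lessThan_Suc_atMost)
    also have "\<dots> = (\<Sum>e'\<le>m. \<Sum>b\<le>a. F (b + q * e'))"
    proof (rule sum.cong[OF refl], rule sum.mono_neutral_right)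
      fix e' assume e': "e' \<in> {..m}"
      show "\<forall>b\<in>{..<q} - {..a}. F (b + q * e') = 0"
      proof
        fix b assume "b \<in> {..<q} - {..a}"
        hence b: "b < q" "a < b" by auto
        have "(of_nat (j choose (b + q * e')) :: 'a) = of_nat (a choose b) * of_nat (m choose e')"
          unfolding j q_def by (rule lucas_step) (use a b q_def in auto)
        also have "\<dots> = 0" using b by (simp add: binomial_eq_0)
        finally show "F (b + q * e') = 0" by (simp add: F_def)
      qed
    qed (use a in auto)
    also have "\<dots> = (\<Sum>e'\<le>m. \<Sum>b\<le>a.
        (fps_const (of_nat (a choose b)) * X b s * Y (a - b) s) *
        (fps_const (of_nat (m choose e')) * GG X (Suc s) e' * GG Y (Suc s) (m - e')))"
    proof (intro sum.cong refl)
      fix e' b assume e': "e' \<in> {..m}" and b: "b \<in> {..a}"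
      have c: "(of_nat (j choose (b + q * e')) :: 'a) = of_nat (a choose b) * of_nat (m choose e')"
        unfolding j q_def by (rule lucas_step) (use a b q_def in auto)
      have jm: "j - (b + q * e') = (a - b) + q * (m - e')"
        using e' b unfolding j by (auto simp: diff_mult_distrib2)
      have g1: "GG X s (b + q * e') = X b s * GG X (Suc s) e'"
        using GG_unfold[of X s "b + q * e'", OF X0] a b q_def by simp
      have g2: "GG Y s ((a - b) + q * (m - e')) = Y (a - b) s * GG Y (Suc s) (m - e')"
        using GG_unfold[of Y s "(a - b) + q * (m - e')", OF Y0] a b q_def by simp
      show "F (b + q * e') = (fps_const (of_nat (a choose b)) * X b s * Y (a - b) s) *
        (fps_const (of_nat (m choose e')) * GG X (Suc s) e' * GG Y (Suc s) (m - e'))"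
        unfolding F_def jm g1 g2 c by (simp add: fps_const_mult[symmetric] ac_simps del: fps_const_mult)
    qed
    also have "\<dots> = (\<Sum>b\<le>a. fps_const (of_nat (a choose b)) * X b s * Y (a - b) s) *
        (\<Sum>e'\<le>m. fps_const (of_nat (m choose e')) * GG X (Suc s) e' * GG Y (Suc s) (m - e'))"
      by (simp add: sum_product sum.swap[where A="{..m}"])
    also have "\<dots> = Z a s * GG Z (Suc s) m"
      using Z[of a s] a less.IH[OF m, of "Suc s"] q_def by simp
    also have "\<dots> = GG Z s j"
      using GG_unfold[of Z s j, OF Z0] a_def m_def q_def by simp
    finally show ?thesis by (simp add: F_def)
  qed
qed


lemma of_nat_fps: "(of_nat n :: 'a::comm_ring_1 fps) = fps_const (of_nat n)"
  by (simp add: fps_of_nat)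

lemma hasse_pow_add:
  "hasse s (x + u) ^ a = (\<Sum>b\<le>a. fps_const (of_nat (a choose b)) * hasse s x ^ b * hasse s u ^ (a - b))"
  by (simp add: hasse_add binomial_ring of_nat_fps)

lemma Dprime_scal:
  fixes x :: "'a::{field,finite} fps"
  assumes "\<alpha> \<noteq> 0" "a < CARD('a)"
  shows "Dprime_digit a s (fps_const \<alpha> * x) = fps_const (\<alpha> ^ a) * Dprime_digit a s x"
proof (cases "a < CARD('a) - 1")
  case True thus ?thesis
    by (simp add: Dprime_digit_def hasse_scal power_mult_distrib fps_const_power)
next
  case False
  hence a: "a = CARD('a) - 1" using assms by simp
  have "\<alpha> ^ a = 1" using fermat_field[OF assms(1)] a by simp
  hence "fps_const \<alpha> ^ (CARD('a) - 1) = 1" using a by (simp add: fps_const_power)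
  thus ?thesis using False a
    by (simp add: Dprime_digit_def hasse_scal power_mult_distrib)
qed

lemma Dprime_add:
  fixes x :: "'a::{field,finite} fps"
  assumes "a < CARD('a)"
  shows "Dprime_digit a s (x + u) =
     (\<Sum>b\<le>a. fps_const (of_nat (a choose b)) * hasse s x ^ b * Dprime_digit (a - b) s u)"
proof (cases "a < CARD('a) - 1")
  case True thus ?thesis
    by (simp add: Dprime_digit_def hasse_pow_add) (rule sum.cong; auto)
next
  case False
  hence a: "a = CARD('a) - 1" using assms by simp
  have q2: "CARD('a) \<ge> 2" by (rule card_ge2)
  have "a \<noteq> 0" using a q2 by simp
  then obtain a' where a': "a = Suc a'" using not0_implies_Suc by blast
  have "Dprime_digit a s (x + u) = hasse s (x + u) ^ a - 1"
    using a by (simp add: Dprime_digit_def)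
  also have "\<dots> = (\<Sum>b\<le>Suc a'. fps_const (of_nat (a choose b)) * hasse s x ^ b * hasse s u ^ (a - b)) - 1"
    by (simp only: hasse_pow_add a')
  also have "\<dots> = (hasse s u ^ a - 1) + (\<Sum>b\<le>a'. fps_const (of_nat (a choose Suc b)) * hasse s x ^ Suc b * hasse s u ^ (a - Suc b))"
    by (simp only: sum.atMost_Suc_shift) simp
  also have "\<dots> = (\<Sum>b\<le>Suc a'. fps_const (of_nat (a choose b)) * hasse s x ^ b * Dprime_digit (a - b) s u)"
  proof -
    have "(\<Sum>b\<le>a'. fps_const (of_nat (a choose Suc b)) * hasse s x ^ Suc b * hasse s u ^ (a - Suc b))
        = (\<Sum>b\<le>a'. fps_const (of_nat (a choose Suc b)) * hasse s x ^ Suc b * Dprime_digit (a - Suc b) s u)"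
      using a by (intro sum.cong refl) (simp add: Dprime_digit_def)
    moreover have "Dprime_digit a s u = hasse s u ^ a - 1" using a by (simp add: Dprime_digit_def)
    ultimately show ?thesis by (simp only: sum.atMost_Suc_shift) (simp add: a'[symmetric])
  qed
  finally show ?thesis by (simp add: a')
qed

theorem proposition4:
  fixes j :: nat and x u :: "'a::{field,finite} fps" and \<alpha> :: 'a
  assumes "\<alpha> \<noteq> 0"
  shows "Dj j (fps_const \<alpha> * x) = fps_const (\<alpha> ^ j) * Dj j x \<and>
         Dj j (x + u) = (\<Sum>e\<in>{..j}. fps_const (of_nat (j choose e)) * Dj e x * Dj (j - e) u) \<and>
         Dpj j (fps_const \<alpha> * x) = fps_const (\<alpha> ^ j) * Dpj j x \<and>
         Dpj j (x + u) = (\<Sum>e\<in>{..j}. fps_const (of_nat (j choose e)) * Dj e x * Dpj (j - e) u)"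
proof (intro conjI)
  show "Dj j (fps_const \<alpha> * x) = fps_const (\<alpha> ^ j) * Dj j x"
    unfolding Dj_GG by (rule GG_scal) (simp add: hasse_scal power_mult_distrib fps_const_power)
  show "Dj j (x + u) = (\<Sum>e\<in>{..j}. fps_const (of_nat (j choose e)) * Dj e x * Dj (j - e) u)"
    unfolding Dj_GG by (rule GG_add) (simp_all add: hasse_pow_add)
  show "Dpj j (fps_const \<alpha> * x) = fps_const (\<alpha> ^ j) * Dpj j x"
    unfolding Dpj_GG by (rule GG_scal) (rule Dprime_scal[OF assms])
  show "Dpj j (x + u) = (\<Sum>e\<in>{..j}. fps_const (of_nat (j choose e)) * Dj e x * Dpj (j - e) u)"
    unfolding Dpj_GG Dj_GG by (rule GG_add) (simp_all add: Dprime_add)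
qed

end
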